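(* Let $\lambda^{(1)}/\mu^{(1)},\ldots,\lambda^{(k)}/\mu^{(k)}$ be skew shapes, none containing a $3\times 2$ block of cells, with $\ell(\lambda^{(i)})\le n$ for all $i$, and let $\vec H=(H^{(1)},\dots,H^{(k)})$ be a $(\underline\lambda,\underline\mu)$-multinetwork. For each $i$ let $I_i\subseteq[n-1]$ be the unique set with $\beta(H^{(i)})=2^{\epsilon(H^{(i)})}\mathbb B(I_i)$. Then \[\beta(\vec H)=2^{\epsilon(\vec H)}\,\mathbb B(I_1\cap\cdots\cap I_k),\qquad \epsilon(\vec H)=\epsilon(H^{(1)})+\cdots+\epsilon(H^{(k)}).\]
   Context: Skew shapes: for partitions $\mu\subseteq\lambda$, $\lambda/\mu$ is the set of cells $(i,j)$ with $\mu_i<j\le\lambda_i$; it contains a $3\times2$ block iff $\lambda_{i+2}\ge\mu_i+2$ for some $i$. Lattice paths: $\mathcal L$ is the directed graph on $\mathbb Z^2$ with edges $(a,b)\to(a,b-1)$ and $(a,b)\to(a-1,b-1)$; a path from $(a,\infty)$ consists of infinitely many south steps on $x=a$ followed by a finite path. For $\ell(\lambda)\le n$, $A(\lambda)_i=(\lambda_i+n-i,\infty)$, $B(\mu)_i=(\mu_i+n-i,0)$. A $(\lambda,\mu)$-path family is $(p_1,\dots,p_n)$ with $p_i:A(\lambda)_i\to B(\mu)_{\sigma(i)}$, $\sigma\in\mathfrak S_n$ its type. A $(\lambda,\mu)$-subnetwork is the multiset union $H$ of edges of a path family (which covers $H$); $\beta(H)\in\mathbb C[\mathfrak S_n]$ is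 the sum of the types of all path families covering $H$. $H$ is a generalized wiring diagram if no vertex lies on three paths of a covering family; then $\theta(\beta(H))=2^{\epsilon(H)}\psi(H)$ for a unique integer $\epsilon(H)$ and Kauffman diagram $\psi(H)\in\mathcal B_n$ (here $\theta:\mathbb C[\mathfrak S_n]\to\mathrm{TL}_n(2)$, $\theta(s_i)=t_i-1$, $\mathrm{TL}_n(2)$ the Temperley–Lieb algebra with parameter 2 and diagram basis $\mathcal B_n$). For shapes avoiding $3\times2$ blocks, every subnetwork is a generalized wiring diagram and $\beta(H)=2^{\epsilon(H)}\mathbb B(I)$ for a unique $I\subseteq[n-1]$, where $\mathbb B(I)=\prod_{i\in I}(1+s_i)$ (increasing order), $s_i=(i,i+1)$. Multinetworks: for tuples $\underline\lambda=(\lambda^{(1)},\dots,\lambda^{(k)})$, $\underline\mu=(\mu^{(1)},\dots,\mu^{(k)})$, a $(\underline\lambda,\underline\mu)$-multinetwork is $\vec H=(H^{(1)},\dots,H^{(k)})$ with each $H^{(i)}$ a $(\lambda^{(i)},\mu^{(i)})$-subnetwork; $\beta(\vec H)=\sum\sigma$, summed over all tuples $(\vec p^{(1)},\dots,\vec p^{(k)})$ such that $\vec p^{(i)}$ covers $H^{(i)}$ and all $\vec p^{(i)}$ have the same type $\sigma$. *)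

theory Defs
  imports Complex_Main "HOL-Combinatorics.Permutations" "HOL-Combinatorics.Transposition"
begin

text \<open>A partition is a weakly decreasing, eventually zero sequence, indexed from 1
  (the value at index 0 is irrelevant and never used).\<close>
definition is_partition :: "(nat \<Rightarrow> nat) \<Rightarrow> bool" where
  "is_partition lam \<longleftrightarrow> (\<forall>i\<ge>1. lam (Suc i) \<le> lam i) \<and> (\<exists>N. \<forall>i\<ge>N. lam i = 0)"

definition len_le :: "(nat \<Rightarrow> nat) \<Rightarrow> nat \<Rightarrow> bool" where
  "len_le lam n \<longleftrightarrow> (\<forall>i>n. lam i = 0)"

definition subpart :: "(nat \<Rightarrow> nat) \<Rightarrow> (nat \<Rightarrow> nat) \<Rightarrow> bool" where
  "subpart mu lam \<longleftrightarrow> (\<forall>i\<ge>1. mu i \<le> lam i)"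

definition has_3x2_block :: "(nat \<Rightarrow> nat) \<Rightarrow> (nat \<Rightarrow> nat) \<Rightarrow> bool" where
  "has_3x2_block lam mu \<longleftrightarrow> (\<exists>i\<ge>1. lam (i + 2) \<ge> mu i + 2)"

text \<open>A path from (a,infinity) to (c,0) in the lattice with steps (x,y)->(x,y-1) and
  (x,y)->(x-1,y-1) is encoded by its x-coordinate p y at each height y >= 0:
  going down from height y+1 to y, x stays or decreases by one; for all large y
  the path is on the line x = a; and p 0 = c.\<close>
definition lpath :: "int \<Rightarrow> int \<Rightarrow> (nat \<Rightarrow> int) \<Rightarrow> bool" where
  "lpath a c p \<longleftrightarrow> (\<forall>y. p (Suc y) = p y \<or> p (Suc y) = p y + 1)
                    \<and> (\<exists>N. \<forall>y\<ge>N. p y = a) \<and> p 0 = c"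

definition path_edge :: "(nat \<Rightarrow> int) \<Rightarrow> nat \<Rightarrow> (int \<times> int) \<times> (int \<times> int)" where
  "path_edge p y = ((p (Suc y), int (Suc y)), (p y, int y))"

definition Apt :: "nat \<Rightarrow> (nat \<Rightarrow> nat) \<Rightarrow> nat \<Rightarrow> int" where
  "Apt n lam i = int (lam i) + int n - int i"

definition Bpt :: "nat \<Rightarrow> (nat \<Rightarrow> nat) \<Rightarrow> nat \<Rightarrow> int" where
  "Bpt n mu i = int (mu i) + int n - int i"

text \<open>A (lam,mu)-path family of type sigma: paths indexed by 1..n (normalised to the
  constant function 0 outside 1..n), p_i from A(lam)_i to B(mu)_(sigma i).\<close>
definition path_family ::
  "nat \<Rightarrow> (nat \<Rightarrow> nat) \<Rightarrow> (nat \<Rightarrow> nat) \<Rightarrow> (nat \<Rightarrow> nat \<Rightarrow> int) \<Rightarrow> (nat \<Rightarrow> nat) \<Rightarrow> bool" where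
  "path_family n lam mu fam \<sigma> \<longleftrightarrow> \<sigma> permutes {1..n}
     \<and> (\<forall>i\<in>{1..n}. lpath (Apt n lam i) (Bpt n mu (\<sigma> i)) (fam i))
     \<and> (\<forall>i. i \<notin> {1..n} \<longrightarrow> fam i = (\<lambda>_. 0))"

definition edge_mult :: "nat \<Rightarrow> (nat \<Rightarrow> nat \<Rightarrow> int) \<Rightarrow> (int \<times> int) \<times> (int \<times> int) \<Rightarrow> nat" where
  "edge_mult n fam e = card {(i, y). i \<in> {1..n} \<and> path_edge (fam i) y = e}"

definition covers :: "nat \<Rightarrow> (nat \<Rightarrow> nat \<Rightarrow> int) \<Rightarrow> ((int \<times> int) \<times> (int \<times> int) \<Rightarrow> nat) \<Rightarrow> bool" where
  "covers n fam H \<longleftrightarrow> (\<forall>e. edge_mult n fam e = H e)"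

definition subnetwork ::
  "nat \<Rightarrow> (nat \<Rightarrow> nat) \<Rightarrow> (nat \<Rightarrow> nat) \<Rightarrow> ((int \<times> int) \<times> (int \<times> int) \<Rightarrow> nat) \<Rightarrow> bool" where
  "subnetwork n lam mu H \<longleftrightarrow> (\<exists>fam \<sigma>. path_family n lam mu fam \<sigma> \<and> covers n fam H)"

text \<open>Elements of C[S_n] are coefficient functions on permutations of {1..n}.
  Product convention: sigma*tau is "first sigma, then tau", i.e. the map tau o sigma.\<close>
type_synonym galg = "(nat \<Rightarrow> nat) \<Rightarrow> complex"

definition gmult :: "nat \<Rightarrow> galg \<Rightarrow> galg \<Rightarrow> galg" where
  "gmult n a b = (\<lambda>\<sigma>. if \<sigma> permutes {1..n}
      then (\<Sum>\<tau>\<in>{\<tau>. \<tau> permutes {1..n}}. a \<tau> * b (\<sigma> \<circ> inv \<tau>)) else 0)"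

definition gbasis :: "nat \<Rightarrow> (nat \<Rightarrow> nat) \<Rightarrow> galg" where
  "gbasis n \<pi> = (\<lambda>\<sigma>. if \<sigma> = \<pi> \<and> \<pi> permutes {1..n} then 1 else 0)"

definition gadd :: "galg \<Rightarrow> galg \<Rightarrow> galg" where
  "gadd a b = (\<lambda>\<sigma>. a \<sigma> + b \<sigma>)"

definition gscale :: "complex \<Rightarrow> galg \<Rightarrow> galg" where
  "gscale c a = (\<lambda>\<sigma>. c * a \<sigma>)"

definition s_gen :: "nat \<Rightarrow> nat \<Rightarrow> galg" where
  "s_gen n i = gbasis n (transpose i (Suc i))"

definition BB :: "nat \<Rightarrow> nat set \<Rightarrow> galg" where
  "BB n I = foldl (\<lambda>acc i. gmult n acc (gadd (gbasis n id) (s_gen n i))) (gbasis n id)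
              (sorted_list_of_set I)"

text \<open>beta(H) = sum of the types of all path families covering H; its coefficient at
  sigma is the number of covering families of type sigma.\<close>
definition beta ::
  "nat \<Rightarrow> (nat \<Rightarrow> nat) \<Rightarrow> (nat \<Rightarrow> nat) \<Rightarrow> ((int \<times> int) \<times> (int \<times> int) \<Rightarrow> nat) \<Rightarrow> galg" where
  "beta n lam mu H = (\<lambda>\<sigma>. of_nat (card {fam. path_family n lam mu fam \<sigma> \<and> covers n fam H}))"

definition beta_multi ::
  "nat \<Rightarrow> nat \<Rightarrow> (nat \<Rightarrow> nat \<Rightarrow> nat) \<Rightarrow> (nat \<Rightarrow> nat \<Rightarrow> nat)
     \<Rightarrow> (nat \<Rightarrow> (int \<times> int) \<times> (int \<times> int) \<Rightarrow> nat) \<Rightarrow> galg" where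
  "beta_multi n k lams mus Hs = (\<lambda>\<sigma>. of_nat (card
     {F :: nat \<Rightarrow> nat \<Rightarrow> nat \<Rightarrow> int.
        (\<forall>j\<in>{1..k}. path_family n (lams j) (mus j) (F j) \<sigma> \<and> covers n (F j) (Hs j))
      \<and> (\<forall>j. j \<notin> {1..k} \<longrightarrow> F j = (\<lambda>_ _. 0))}))"

end

theory Submission imports Defs begin

definition wl :: "nat list \<Rightarrow> nat \<Rightarrow> nat" where
  "wl xs = foldl (\<lambda>w i. transpose i (Suc i) \<circ> w) id xs"

lemma wl_Nil[simp]: "wl [] = id" by (simp add: wl_def)
lemma wl_snoc[simp]: "wl (xs @ [a]) = transpose a (Suc a) \<circ> wl xs" by (simp add: wl_def)

lemma wl_supp: "y \<notin> set xs \<Longrightarrow> y \<notin> Suc ` set xs \<Longrightarrow> wl xs y = y"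
proof (induction xs rule: rev_induct)
  case Nil then show ?case by simp
next
  case (snoc a xs)
  then have "wl xs y = y" by simp
  moreover have "y \<noteq> a" "y \<noteq> Suc a" using snoc.prems by auto
  ultimately show ?case by simp
qed

lemma wl_key:
  "sorted_wrt (<) xs \<Longrightarrow> (x \<in> set xs \<longrightarrow> wl xs (Suc x) = x) \<and> (x \<notin> set xs \<longrightarrow> Suc x \<le> wl xs (Suc x))"
proof (induction xs arbitrary: x rule: rev_induct)
  case Nil then show ?case by simp
next
  case (snoc a xs)
  have s: "sorted_wrt (<) xs" and lt: "\<forall>y\<in>set xs. y < a" using snoc.prems by (auto simp: sorted_wrt_append)
  have IH: "(x \<in> set xs \<longrightarrow> wl xs (Suc x) = x) \<and> (x \<notin> set xs \<longrightarrow> Suc x \<le> wl xs (Suc x))" for x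
    using snoc.IH[OF s] by blast
  have sa: "wl xs (Suc a) = Suc a" using lt by (intro wl_supp) auto
  show ?case
  proof (cases "x = a")
    case True then show ?thesis using sa by simp
  next
    case False
    show ?thesis
    proof (cases "x \<in> set xs")
      case True
      then have "x < a" using lt by auto
      then have "wl xs (Suc x) = x" using IH[of x] True by simp
      then show ?thesis using \<open>x < a\<close> True by simp
    next
      case F2: False
      show ?thesis
      proof (cases "x < a")
        case True
        define w where "w = wl xs (Suc x)"
        have w: "Suc x \<le> w" using IH[of x] F2 unfolding w_def by simp
        have "Suc x \<le> transpose a (Suc a) w"
          using w True by (cases "w = a"; cases "w = Suc a") auto
        then show ?thesis using False F2 unfolding w_def by simp
      next
        case False2: False
        then have "wl xs (Suc x) = Suc x" using lt by (intro wl_supp) auto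
        moreover have "Suc x \<noteq> a" "Suc x \<noteq> Suc a" using False False2 by auto
        ultimately show ?thesis using False F2 by simp
      qed
    qed
  qed
qed

lemma wl_permutes: "set xs \<subseteq> {1..n-1} \<Longrightarrow> wl xs permutes {1..n}"
proof (induction xs rule: rev_induct)
  case Nil show ?case unfolding wl_Nil by (rule permutes_id)
next
  case (snoc a xs)
  have "transpose a (Suc a) permutes {1..n}" using snoc.prems by (intro permutes_swap_id) auto
  moreover have "wl xs permutes {1..n}" using snoc by auto
  ultimately show ?case unfolding wl_snoc by (rule permutes_compose[rotated])
qed

definition wS :: "nat set \<Rightarrow> nat \<Rightarrow> nat" where
  "wS J = wl (sorted_list_of_set J)"

lemma wS_mem: "finite J \<Longrightarrow> x \<in> J \<longleftrightarrow> wS J (Suc x) = x"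
  using wl_key[of "sorted_list_of_set J" x] by (auto simp: wS_def)

lemma wS_inj:
  assumes "finite J" "finite J'" "wS J = wS J'"
  shows "J = J'"
proof (rule set_eqI)
  fix x
  have "x \<in> J \<longleftrightarrow> wS J (Suc x) = x" by (rule wS_mem[OF assms(1)])
  also have "\<dots> \<longleftrightarrow> wS J' (Suc x) = x" using assms(3) by simp
  also have "\<dots> \<longleftrightarrow> x \<in> J'" by (rule wS_mem[OF assms(2), symmetric])
  finally show "x \<in> J \<longleftrightarrow> x \<in> J'" .
qed

lemma wS_permutes: "J \<subseteq> {1..n-1} \<Longrightarrow> wS J permutes {1..n}"
proof -
  assume a: "J \<subseteq> {1..n-1}"
  then have "finite J" using finite_subset by blast
  then show ?thesis unfolding wS_def using a by (intro wl_permutes) simp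
qed

lemma sorted_snoc_max:
  assumes "finite J" "a \<notin> J" "\<forall>x\<in>J. x < a"
  shows "sorted_list_of_set (insert a J) = sorted_list_of_set J @ [a]"
proof -
  have "sorted_wrt (<) (sorted_list_of_set J @ [a])" using assms by (auto simp: sorted_wrt_append)
  moreover have "set (sorted_list_of_set J @ [a]) = insert a J" using assms by auto
  moreover have "length (sorted_list_of_set J @ [a]) = card (insert a J)" using assms by auto
  ultimately show ?thesis using sorted_list_of_set_unique[of "insert a J"] assms by blast
qed

definition Wset :: "nat set \<Rightarrow> (nat \<Rightarrow> nat) set" where
  "Wset I = {wS J | J. J \<subseteq> I}"

lemma Wset_insert:
  assumes "finite S" "a \<notin> S" "\<forall>x\<in>S. x < a"
  shows "Wset (insert a S) = Wset S \<union> (\<lambda>w. transpose a (Suc a) \<circ> w) ` Wset S"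
proof
  show "Wset (insert a S) \<subseteq> Wset S \<union> (\<lambda>w. transpose a (Suc a) \<circ> w) ` Wset S"
  proof
    fix w assume "w \<in> Wset (insert a S)"
    then obtain J where J: "J \<subseteq> insert a S" "w = wS J" by (auto simp: Wset_def)
    show "w \<in> Wset S \<union> (\<lambda>w. transpose a (Suc a) \<circ> w) ` Wset S"
    proof (cases "a \<in> J")
      case False then have "J \<subseteq> S" using J by auto
      then show ?thesis using J by (auto simp: Wset_def)
    next
      case True
      have fJ: "finite (J - {a})" using J assms finite_subset by auto
      have hJ: "insert a (J - {a}) = J" using True by auto
      have "a \<notin> J - {a}" "\<forall>x\<in>J - {a}. x < a" using J assms by auto
      then have "sorted_list_of_set (insert a (J - {a})) = sorted_list_of_set (J - {a}) @ [a]"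
        using sorted_snoc_max[OF fJ] by blast
      then have "sorted_list_of_set J = sorted_list_of_set (J - {a}) @ [a]"
        by (simp only: hJ)
      then have "wS J = transpose a (Suc a) \<circ> wS (J - {a})"
        unfolding wS_def by simp
      moreover have "J - {a} \<subseteq> S" using J by auto
      ultimately show ?thesis using J by (auto simp: Wset_def)
    qed
  qed
next
  show "Wset S \<union> (\<lambda>w. transpose a (Suc a) \<circ> w) ` Wset S \<subseteq> Wset (insert a S)"
  proof
    fix w assume "w \<in> Wset S \<union> (\<lambda>w. transpose a (Suc a) \<circ> w) ` Wset S"
    then show "w \<in> Wset (insert a S)"
    proof
      assume "w \<in> Wset S" then show ?thesis by (auto simp: Wset_def)
    next
      assume "w \<in> (\<lambda>w. transpose a (Suc a) \<circ> w) ` Wset S"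
      then obtain J where J: "J \<subseteq> S" "w = transpose a (Suc a) \<circ> wS J" by (auto simp: Wset_def)
      have fJ: "finite J" using J assms finite_subset by auto
      have "a \<notin> J" "\<forall>x\<in>J. x < a" using J assms by auto
      then have "wS (insert a J) = w" using sorted_snoc_max[OF fJ] J unfolding wS_def by simp
      moreover have "insert a J \<subseteq> insert a S" using J by auto
      ultimately show ?thesis unfolding Wset_def by blast
    qed
  qed
qed


lemma gmult_step:
  assumes pp: "\<pi> permutes {1..n}" and inv: "\<pi> \<circ> \<pi> = id"
  shows "gmult n a (gadd (gbasis n id) (gbasis n \<pi>)) \<sigma> = (if \<sigma> permutes {1..n} then a \<sigma> + a (\<pi> \<circ> \<sigma>) else 0)"
proof (cases "\<sigma> permutes {1..n}")
  case False then show ?thesis by (simp add: gmult_def)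
next
  case True
  let ?P = "{\<tau>. \<tau> permutes {1..n}}"
  have e1: "\<sigma> \<circ> inv \<tau> = id \<longleftrightarrow> \<tau> = \<sigma>" if "\<tau> permutes {1..n}" for \<tau>
  proof -
    have "inv \<tau> \<circ> \<tau> = id" "\<tau> \<circ> inv \<tau> = id" using permutes_inv_o[OF that] by auto
    then show ?thesis by (metis comp_assoc comp_id fun.map_id)
  qed
  have e2: "\<sigma> \<circ> inv \<tau> = \<pi> \<longleftrightarrow> \<tau> = \<pi> \<circ> \<sigma>" if "\<tau> permutes {1..n}" for \<tau>
  proof -
    have a1: "inv \<tau> \<circ> \<tau> = id" "\<tau> \<circ> inv \<tau> = id" using permutes_inv_o[OF that] by auto
    have "\<sigma> \<circ> inv \<tau> = \<pi> \<longleftrightarrow> \<sigma> = \<pi> \<circ> \<tau>"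
      by (metis a1 comp_assoc comp_id)
    also have "\<dots> \<longleftrightarrow> \<pi> \<circ> \<sigma> = \<tau>"
      by (metis inv comp_assoc id_comp)
    finally show ?thesis by auto
  qed
  have ps: "\<pi> \<circ> \<sigma> permutes {1..n}" using True pp by (rule permutes_compose)
  have "gmult n a (gadd (gbasis n id) (gbasis n \<pi>)) \<sigma>
      = (\<Sum>\<tau>\<in>?P. (if \<tau> = \<sigma> then a \<tau> else 0) + (if \<tau> = \<pi> \<circ> \<sigma> then a \<tau> else 0))"
    unfolding gmult_def gadd_def if_P[OF True]
    by (intro sum.cong) (use pp in \<open>auto simp: gbasis_def e1 e2 permutes_id distrib_left\<close>)
  also have "\<dots> = a \<sigma> + a (\<pi> \<circ> \<sigma>)"
    using True ps by (simp add: sum.distrib sum.delta finite_permutations)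
  finally show ?thesis using True by simp
qed

lemma Wset_permutes: "I \<subseteq> {1..n-1} \<Longrightarrow> w \<in> Wset I \<Longrightarrow> w permutes {1..n}"
  unfolding Wset_def using wS_permutes by auto

lemma fold_char:
  "sorted_wrt (<) xs \<Longrightarrow> set xs \<subseteq> {1..n-1} \<Longrightarrow>
   foldl (\<lambda>acc i. gmult n acc (gadd (gbasis n id) (s_gen n i))) (gbasis n id) xs
     = (\<lambda>\<sigma>. if \<sigma> \<in> Wset (set xs) then 1 else 0)"
proof (induction xs rule: rev_induct)
  case Nil
  have "Wset {} = {id}" unfolding Wset_def wS_def by auto
  then show ?case using permutes_id[of "{1..n}"] by (auto simp: gbasis_def id_def)
next
  case (snoc a xs)
  let ?t = "transpose a (Suc a)"
  let ?S = "set xs"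
  have s: "sorted_wrt (<) xs" and lt: "\<forall>y\<in>?S. y < a" using snoc.prems by (auto simp: sorted_wrt_append)
  have sub: "?S \<subseteq> {1..n-1}" and a: "a \<in> {1..n-1}" using snoc.prems by auto
  have IH: "foldl (\<lambda>acc i. gmult n acc (gadd (gbasis n id) (s_gen n i))) (gbasis n id) xs
     = (\<lambda>\<sigma>. if \<sigma> \<in> Wset ?S then 1 else 0)" using snoc.IH s sub by blast
  have tp: "?t permutes {1..n}" using a by (intro permutes_swap_id) auto
  have tt: "?t \<circ> ?t = id" by simp
  have WI: "Wset (insert a ?S) = Wset ?S \<union> (\<lambda>w. ?t \<circ> w) ` Wset ?S"
    using lt by (intro Wset_insert) auto
  have sub2: "insert a ?S \<subseteq> {1..n-1}" using sub a by auto
  have disj: False if th: "\<sigma> \<in> Wset ?S" "?t \<circ> \<sigma> \<in> Wset ?S" for \<sigma>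
  proof -
    obtain J where J: "J \<subseteq> ?S" "\<sigma> = wS J" using th(1) by (auto simp: Wset_def)
    obtain J' where J': "J' \<subseteq> ?S" "?t \<circ> \<sigma> = wS J'" using th(2) by (auto simp: Wset_def)
    have fJ: "finite J" "finite J'" using J J' finite_subset by auto
    have ltJ: "\<forall>y\<in>J. y < a" using J lt by auto
    have "wS J (Suc a) = Suc a" unfolding wS_def using fJ ltJ
      by (intro wl_supp) force+
    then have "wS J' (Suc a) = a" using J J' by (metis comp_apply transpose_apply_second)
    then have "a \<in> J'" using wS_mem[OF fJ(2)] by blast
    then show False using J' lt by auto
  qed
  have memt: "?t \<circ> \<sigma> \<in> Wset ?S \<longleftrightarrow> \<sigma> \<in> (\<lambda>w. ?t \<circ> w) ` Wset ?S" for \<sigma>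
  proof
    assume "?t \<circ> \<sigma> \<in> Wset ?S"
    moreover have "\<sigma> = ?t \<circ> (?t \<circ> \<sigma>)" by (simp add: comp_assoc[symmetric])
    ultimately show "\<sigma> \<in> (\<lambda>w. ?t \<circ> w) ` Wset ?S" by blast
  next
    assume "\<sigma> \<in> (\<lambda>w. ?t \<circ> w) ` Wset ?S"
    then obtain w where "w \<in> Wset ?S" "\<sigma> = ?t \<circ> w" by blast
    then show "?t \<circ> \<sigma> \<in> Wset ?S" by (simp add: comp_assoc[symmetric])
  qed
  show ?case
  proof
    fix \<sigma>
    have "foldl (\<lambda>acc i. gmult n acc (gadd (gbasis n id) (s_gen n i))) (gbasis n id) (xs @ [a]) \<sigma>
        = gmult n (foldl (\<lambda>acc i. gmult n acc (gadd (gbasis n id) (s_gen n i))) (gbasis n id) xs)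
            (gadd (gbasis n id) (gbasis n ?t)) \<sigma>" by (simp add: s_gen_def)
    also have "\<dots> = gmult n (\<lambda>\<sigma>. if \<sigma> \<in> Wset ?S then 1 else 0) (gadd (gbasis n id) (gbasis n ?t)) \<sigma>"
      by (simp only: IH)
    also have "\<dots> = (if \<sigma> permutes {1..n} then (if \<sigma> \<in> Wset ?S then 1 else 0) + (if ?t \<circ> \<sigma> \<in> Wset ?S then 1 else 0) else 0)"
      by (rule gmult_step[OF tp tt])
    also have "\<dots> = (if \<sigma> \<in> Wset (set (xs @ [a])) then 1 else 0)"
    proof (cases "\<sigma> permutes {1..n}")
      case False
      then have "\<sigma> \<notin> Wset (insert a ?S)" using Wset_permutes[OF sub2] by blast
      then show ?thesis using False by simp
    next
      case True
      show ?thesis using True disj[of \<sigma>] memt[of \<sigma>] by (auto simp: WI)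
    qed
    finally show "foldl (\<lambda>acc i. gmult n acc (gadd (gbasis n id) (s_gen n i))) (gbasis n id) (xs @ [a]) \<sigma>
        = (if \<sigma> \<in> Wset (set (xs @ [a])) then 1 else 0)" .
  qed
qed

lemma BB_char: "I \<subseteq> {1..n-1} \<Longrightarrow> BB n I = (\<lambda>\<sigma>. if \<sigma> \<in> Wset I then 1 else 0)"
proof -
  assume a: "I \<subseteq> {1..n-1}"
  then have f: "finite I" using finite_subset by blast
  show ?thesis unfolding BB_def using fold_char[of "sorted_list_of_set I" n] f a by simp
qed

lemma Wset_mono: "I \<subseteq> I' \<Longrightarrow> Wset I \<subseteq> Wset I'"
  unfolding Wset_def by auto

lemma Wset_Inter:
  assumes "finite K" "K \<noteq> {}" "\<forall>j\<in>K. finite (I j)"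
  shows "\<sigma> \<in> Wset (\<Inter>j\<in>K. I j) \<longleftrightarrow> (\<forall>j\<in>K. \<sigma> \<in> Wset (I j))"
proof
  assume "\<sigma> \<in> Wset (\<Inter>j\<in>K. I j)"
  then show "\<forall>j\<in>K. \<sigma> \<in> Wset (I j)" using Wset_mono[of "\<Inter>j\<in>K. I j"] by blast
next
  assume h: "\<forall>j\<in>K. \<sigma> \<in> Wset (I j)"
  obtain j0 where j0: "j0 \<in> K" using assms by auto
  obtain J where J: "J \<subseteq> I j0" "\<sigma> = wS J" using h j0 by (auto simp: Wset_def)
  have fJ: "finite J" using J assms j0 finite_subset by blast
  have "J \<subseteq> I j" if jK: "j \<in> K" for j
  proof -
    obtain J' where J': "J' \<subseteq> I j" "\<sigma> = wS J'" using h jK by (auto simp: Wset_def)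
    have "finite J'" using J' assms jK finite_subset by blast
    then have "J' = J" using wS_inj fJ J J' by metis
    then show ?thesis using J' by simp
  qed
  then show "\<sigma> \<in> Wset (\<Inter>j\<in>K. I j)" using J unfolding Wset_def by blast
qed


lemma prod_powi_sum: "finite K \<Longrightarrow> (\<Prod>j\<in>K. (2::complex) powi e j) = 2 powi (\<Sum>j\<in>K. e j)"
  by (induction K rule: finite_induct) (auto simp: power_int_add)

lemma prod_ind: "finite K \<Longrightarrow> (\<Prod>j\<in>K. if P j then 1 else 0) = (if \<forall>j\<in>K. P j then 1 else (0::complex))"
  by (induction K rule: finite_induct) auto

lemma card_tuples:
  fixes P :: "nat \<Rightarrow> (nat \<Rightarrow> nat \<Rightarrow> int) \<Rightarrow> bool"
  shows "card {F :: nat \<Rightarrow> nat \<Rightarrow> nat \<Rightarrow> int. (\<forall>j\<in>{1..k}. P j (F j)) \<and> (\<forall>j. j \<notin> {1..k} \<longrightarrow> F j = (\<lambda>_ _. 0))}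
       = (\<Prod>j\<in>{1..k}. card {fam. P j fam})"
proof -
  let ?S = "{F :: nat \<Rightarrow> nat \<Rightarrow> nat \<Rightarrow> int. (\<forall>j\<in>{1..k}. P j (F j)) \<and> (\<forall>j. j \<notin> {1..k} \<longrightarrow> F j = (\<lambda>_ _. 0))}"
  let ?B = "PiE {1..k} (\<lambda>j. {fam. P j fam})"
  have "bij_betw (\<lambda>F. restrict F {1..k}) ?S ?B"
  proof (rule bij_betw_byWitness[where f' = "\<lambda>G j. if j \<in> {1..k} then G j else (\<lambda>_ _. 0)"])
    show "\<forall>a\<in>?S. (\<lambda>j. if j \<in> {1..k} then restrict a {1..k} j else (\<lambda>_ _. 0)) = a"
      by (auto simp: fun_eq_iff)
    show "\<forall>a'\<in>?B. restrict (\<lambda>j. if j \<in> {1..k} then a' j else (\<lambda>_ _. 0)) {1..k} = a'"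
      by (auto simp: fun_eq_iff PiE_def extensional_def)
    show "(\<lambda>F. restrict F {1..k}) ` ?S \<subseteq> ?B" by auto
    show "(\<lambda>G j. if j \<in> {1..k} then G j else (\<lambda>_ _. 0)) ` ?B \<subseteq> ?S" by auto
  qed
  then have "card ?S = card ?B" by (rule bij_betw_same_card)
  also have "\<dots> = (\<Prod>j\<in>{1..k}. card {fam. P j fam})" by (simp add: card_PiE)
  finally show ?thesis .
qed

theorem mainTheorem3:
  fixes n k :: nat
    and lams mus :: "nat \<Rightarrow> nat \<Rightarrow> nat"
    and Hs :: "nat \<Rightarrow> (int \<times> int) \<times> (int \<times> int) \<Rightarrow> nat"
    and I :: "nat \<Rightarrow> nat set"
    and eps :: "nat \<Rightarrow> int"
  assumes "k \<ge> 1"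
    and "\<forall>j\<in>{1..k}. is_partition (lams j) \<and> is_partition (mus j) \<and> subpart (mus j) (lams j)
                     \<and> len_le (lams j) n \<and> \<not> has_3x2_block (lams j) (mus j)"
    and "\<forall>j\<in>{1..k}. subnetwork n (lams j) (mus j) (Hs j)"
    and "\<forall>j\<in>{1..k}. I j \<subseteq> {1..n-1}
                     \<and> beta n (lams j) (mus j) (Hs j) = gscale (2 powi eps j) (BB n (I j))"
  shows "beta_multi n k lams mus Hs
           = gscale (2 powi (\<Sum>j\<in>{1..k}. eps j)) (BB n (\<Inter>j\<in>{1..k}. I j))"
proof
  fix \<sigma>
  have K: "finite {1..k}" "{1..k} \<noteq> {}" using assms(1) by auto
  have sub: "\<forall>j\<in>{1..k}. I j \<subseteq> {1..n-1}" using assms(4) by auto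
  have fin: "\<forall>j\<in>{1..k}. finite (I j)" using sub finite_subset by blast
  have subI: "(\<Inter>j\<in>{1..k}. I j) \<subseteq> {1..n-1}" using sub K by blast
  have bj: "beta n (lams j) (mus j) (Hs j) \<sigma> = 2 powi eps j * (if \<sigma> \<in> Wset (I j) then 1 else 0)"
    if "j \<in> {1..k}" for j
    using assms(4) that BB_char[of "I j" n] by (auto simp: gscale_def)
  have "beta_multi n k lams mus Hs \<sigma>
      = of_nat (\<Prod>j\<in>{1..k}. card {fam. path_family n (lams j) (mus j) fam \<sigma> \<and> covers n fam (Hs j)})"
    unfolding beta_multi_def by (subst card_tuples) simp
  also have "\<dots> = (\<Prod>j\<in>{1..k}. beta n (lams j) (mus j) (Hs j) \<sigma>)"
    by (simp add: beta_def)
  also have "\<dots> = (\<Prod>j\<in>{1..k}. 2 powi eps j * (if \<sigma> \<in> Wset (I j) then 1 else 0))"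
    using bj by (intro prod.cong) auto
  also have "\<dots> = 2 powi (\<Sum>j\<in>{1..k}. eps j) * (if \<forall>j\<in>{1..k}. \<sigma> \<in> Wset (I j) then 1 else 0)"
    by (simp add: prod.distrib prod_powi_sum prod_ind)
  also have "\<dots> = gscale (2 powi (\<Sum>j\<in>{1..k}. eps j)) (BB n (\<Inter>j\<in>{1..k}. I j)) \<sigma>"
    using Wset_Inter[OF K fin, of \<sigma>] BB_char[OF subI] by (simp add: gscale_def)
  finally show "beta_multi n k lams mus Hs \<sigma> = gscale (2 powi (\<Sum>j\<in>{1..k}. eps j)) (BB n (\<Inter>j\<in>{1..k}. I j)) \<sigma>" .
qed

end
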